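(* Let $r_1 \ge 2$ and $x_1 \ge 1$ be integers and $d = x_1 + r_1 - 1$. Let $R = K[z_1,\ldots,z_{r_1+3},y_1,\ldots,y_d]$ over a field $K$ with the lexicographic order $<_{lex}$ given by $z_1 > \cdots > z_{r_1+3} > y_1 > \cdots > y_d$. Let $B$ be the set of pairs $(i,j)\in\mathbb{N}^2$ with $j-i\ge 2$, $1\le i\le r_1$, $j \le r_1+3$, $j\ne r_1+1$, and let $J$ be the monomial ideal of $R$ generated by the monomials $z_iz_j$ for $(i,j)\in B$, $z_{k+1}\prod_{s=1}^{r_1-1}y_s$ for $0\le k\le r_1-1$, $z_{r_1-k}\prod_{s=r_1}^{d}y_s$ for $0\le k\le r_1-1$, $z_{r_1+2}\prod_{s=1}^{r_1-1}y_s$, and $z_{r_1+1}\prod_{s=r_1}^{d}y_s$. Suppose $f = z_1^{\gamma_1}\cdots z_{r_1+3}^{\gamma_{r_1+3}} y_1^{\delta_1}\cdots y_d^{\delta_d}$ is a monomial with $f \notin J$ and $\gamma_i > 0$ for at least one $i$. Let $m$ be the minimal index with $\gamma_m > 0$. Then $|\{i : \gamma_i > 0\}| \le 3$, and moreover: (1) if $1 \le m \le r_1-1$, then $\gamma_i = 0$ for all $i \in \{1,\ldots,r_1+3\}\setminus\{m, m+1, r_1+1\}$; (2) if $m = r_1$, then $\gamma_i = 0$ for all $i \in \{1,\ldots,r_1-1\}\cup\{r_1+3\}$; (3) if $m \in \{r_1+1, r_1+2, r_1+3\}$, then $\gamma_i = 0$ for all $i < m$.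
   Context: The ideal $J$ is the initial ideal, with respect to $<_{lex}$, generated by the leading terms of a specific set of binomials in the toric ideal of the lattice points of the simplex $\mathrm{conv}\{\mathbf{e}_1,\ldots,\mathbf{e}_d,-\mathbf{q}\}$, $\mathbf{q}=(r_1^{x_1},(1+r_1x_1)^{r_1-1})$; only the monomials listed are needed for the statement. *)

theory Defs
  imports Main
begin

text \<open>A monomial of R = K[z_1..z_{r1+3}, y_1..y_d] is represented by its pair of
exponent functions (gamma, delta): gamma i is the exponent of z_i, delta s that of y_s.\<close>

type_synonym monom = "(nat \<Rightarrow> nat) \<times> (nat \<Rightarrow> nat)"

definition is_monom :: "nat \<Rightarrow> nat \<Rightarrow> monom \<Rightarrow> bool" where
  "is_monom r1 x1 f \<longleftrightarrow> (\<forall>i. fst f i > 0 \<longrightarrow> 1 \<le> i \<and> i \<le> r1 + 3)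
                        \<and> (\<forall>s. snd f s > 0 \<longrightarrow> 1 \<le> s \<and> s \<le> x1 + r1 - 1)"

definition zvar :: "nat set \<Rightarrow> monom" where
  "zvar A = ((\<lambda>i. if i \<in> A then 1 else 0), (\<lambda>_. 0))"

definition ysq :: "nat \<Rightarrow> nat \<Rightarrow> nat \<Rightarrow> monom" where
  "ysq k a b = ((\<lambda>i. if i = k then 1 else 0), (\<lambda>s. if a \<le> s \<and> s \<le> b then 1 else 0))"

definition Bset :: "nat \<Rightarrow> (nat \<times> nat) set" where
  "Bset r1 = {(i, j). 2 \<le> j - i \<and> i < j \<and> 1 \<le> i \<and> i \<le> r1 \<and> j \<le> r1 + 3 \<and> j \<noteq> r1 + 1}"

definition Jgens :: "nat \<Rightarrow> nat \<Rightarrow> monom set" where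
  "Jgens r1 x1 =
     {zvar {i, j} | i j. (i, j) \<in> Bset r1}
   \<union> {ysq (k + 1) 1 (r1 - 1) | k. k \<le> r1 - 1}
   \<union> {ysq (r1 - k) r1 (x1 + r1 - 1) | k. k \<le> r1 - 1}
   \<union> {ysq (r1 + 2) 1 (r1 - 1), ysq (r1 + 1) r1 (x1 + r1 - 1)}"

definition mdvd :: "monom \<Rightarrow> monom \<Rightarrow> bool" where
  "mdvd g f \<longleftrightarrow> (\<forall>i. fst g i \<le> fst f i) \<and> (\<forall>s. snd g s \<le> snd f s)"

text \<open>A monomial lies in the monomial ideal J iff it is divisible by one of its generators;
 we define membership of monomials in J in this standard way.\<close>
definition in_J :: "nat \<Rightarrow> nat \<Rightarrow> monom \<Rightarrow> bool" where
  "in_J r1 x1 f \<longleftrightarrow> (\<exists>g \<in> Jgens r1 x1. mdvd g f)"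

end

theory Submission
  imports Defs
begin

lemma key:
  assumes "\<not> in_J r1 x1 (gamma, delta)" "1 \<le> i" "i \<le> r1" "i + 2 \<le> j" "j \<le> r1 + 3" "j \<noteq> r1 + 1"
    and "gamma i > 0"
  shows "gamma j = 0"
proof (rule ccontr)
  assume "gamma j \<noteq> 0"
  have "(i, j) \<in> Bset r1" using assms unfolding Bset_def by auto
  hence "zvar {i, j} \<in> Jgens r1 x1" unfolding Jgens_def by blast
  moreover have "mdvd (zvar {i, j}) (gamma, delta)"
    unfolding mdvd_def zvar_def using assms(7) \<open>gamma j \<noteq> 0\<close> by auto
  ultimately show False using assms(1) unfolding in_J_def by blast
qed

theorem lemma3p4:
  fixes r1 x1 :: nat and gamma delta :: "nat \<Rightarrow> nat"
  assumes "r1 \<ge> 2" and "x1 \<ge> 1"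
    and "is_monom r1 x1 (gamma, delta)"
    and "\<not> in_J r1 x1 (gamma, delta)"
    and "\<exists>i. gamma i > 0"
  defines "m \<equiv> (LEAST i. gamma i > 0)"
  shows "card {i. gamma i > 0} \<le> 3
         \<and> (1 \<le> m \<and> m \<le> r1 - 1 \<longrightarrow>
              (\<forall>i \<in> {1..r1 + 3} - {m, m + 1, r1 + 1}. gamma i = 0))
         \<and> (m = r1 \<longrightarrow> (\<forall>i \<in> {1..r1 - 1} \<union> {r1 + 3}. gamma i = 0))
         \<and> (m \<in> {r1 + 1, r1 + 2, r1 + 3} \<longrightarrow> (\<forall>i < m. gamma i = 0))"
proof -
  have gm: "gamma m > 0" unfolding m_def using assms(5) by (metis LeastI)
  have lt: "\<And>i. i < m \<Longrightarrow> gamma i = 0" unfolding m_def using not_less_Least by blast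
  have supp: "\<And>i. gamma i > 0 \<Longrightarrow> 1 \<le> i \<and> i \<le> r1 + 3"
    using assms(3) unfolding is_monom_def by auto
  have m1: "1 \<le> m" "m \<le> r1 + 3" using supp[OF gm] by auto
  have K: "\<And>i j. 1 \<le> i \<Longrightarrow> i \<le> r1 \<Longrightarrow> i + 2 \<le> j \<Longrightarrow> j \<le> r1 + 3 \<Longrightarrow> j \<noteq> r1 + 1
      \<Longrightarrow> gamma i > 0 \<Longrightarrow> gamma j = 0"
    using key[OF assms(4)] by blast
  have c1: "m \<le> r1 - 1 \<longrightarrow> (\<forall>i \<in> {1..r1 + 3} - {m, m + 1, r1 + 1}. gamma i = 0)"
  proof (intro impI ballI)
    fix i assume a: "m \<le> r1 - 1" "i \<in> {1..r1 + 3} - {m, m + 1, r1 + 1}"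
    show "gamma i = 0"
    proof (cases "i < m")
      case True then show ?thesis using lt by blast
    next
      case False then show ?thesis using a K[of m i] gm m1 assms(1) by auto
    qed
  qed
  have c2: "m = r1 \<longrightarrow> (\<forall>i \<in> {1..r1 - 1} \<union> {r1 + 3}. gamma i = 0)"
  proof (intro impI ballI)
    fix i assume a: "m = r1" "i \<in> {1..r1 - 1} \<union> {r1 + 3}"
    show "gamma i = 0"
    proof (cases "i < m")
      case True then show ?thesis using lt by blast
    next
      case False then show ?thesis using a K[of m i] gm m1 assms(1) by auto
    qed
  qed
  have S: "{i. gamma i > 0} \<subseteq> {m, m+1, r1+1} \<or> {i. gamma i > 0} \<subseteq> {r1, r1+1, r1+2}
      \<or> {i. gamma i > 0} \<subseteq> {r1+1, r1+2, r1+3}"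
  proof (cases "m \<le> r1 - 1")
    case True
    have "{i. gamma i > 0} \<subseteq> {m, m+1, r1+1}"
    proof
      fix i assume "i \<in> {i. gamma i > 0}"
      then have g: "gamma i > 0" by simp
      have "i \<in> {1..r1 + 3}" using supp g by simp
      show "i \<in> {m, m+1, r1+1}"
      proof (rule ccontr)
        assume "i \<notin> {m, m+1, r1+1}"
        then have "gamma i = 0" using c1 True \<open>i \<in> {1..r1 + 3}\<close> by blast
        then show False using g by simp
      qed
    qed
    then show ?thesis by blast
  next
    case F: False
    show ?thesis
    proof (cases "m = r1")
      case True
      have "{i. gamma i > 0} \<subseteq> {r1, r1+1, r1+2}"
      proof
        fix i assume "i \<in> {i. gamma i > 0}"
        then have g: "gamma i > 0" by simp
        have "\<not> i < m" using g lt by (metis less_irrefl)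
        moreover have "i \<noteq> r1 + 3" using g c2 True by auto
        moreover have "i \<le> r1 + 3" using supp g by blast
        ultimately show "i \<in> {r1, r1+1, r1+2}" using True by auto
      qed
      then show ?thesis by blast
    next
      case False
      have "{i. gamma i > 0} \<subseteq> {r1+1, r1+2, r1+3}"
      proof
        fix i assume "i \<in> {i. gamma i > 0}"
        then have g: "gamma i > 0" by simp
        have "\<not> i < m" using g lt by (metis less_irrefl)
        moreover have "i \<le> r1 + 3" using supp g by blast
        ultimately show "i \<in> {r1+1, r1+2, r1+3}" using False F assms(1) by auto
      qed
      then show ?thesis by blast
    qed
  qed
  have "card {i. gamma i > 0} \<le> 3"
  proof -
    have "\<And>a b c. card {a, b, c::nat} \<le> 3" by (simp add: card_insert_le_m1)
    then show ?thesis using S by (meson card_mono finite.emptyI finite_insert le_trans)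
  qed
  then show ?thesis using c1 c2 lt m1 by auto
qed

end
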